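(* Let $G=(V,E)$ be a connected undirected graph with positive edge weights $w$, and run the distributed algorithm described in the context synchronously at every node. Then for every node $v\in V$ and every node $t\in V$, at any time after the first $\mathcal{D}(G)+1$ phases have been completed, the variable $S[v,t]$ at $v$ equals $\sigma_{v,t}$.
   Context: Graph notions. $G=(V,E)$ is connected, undirected, with weights $w(e)>0$; $N(v)$ is the set of neighbors of $v$ and $N[v]=N(v)\cup\{v\}$. The length of a path is the sum of its edge weights; $\mathrm{dist}(s,t)$ is the length of a shortest $s$–$t$ path. For $s\neq t$, $\mathrm{maxhop}(s,t)$ is the maximum number of edges of a shortest (minimum-length) $s$–$t$ path, $\mathrm{maxhop}(s,s)=0$, and $\mathcal{D}(G)=\max_{s,t\in V}\mathrm{maxhop}(s,t)$. $\sigma_{s,t}$ is the number of shortest $s$–$t$ paths, with $\sigma_{s,s}=1$. Algorithm (at each node $v$). Initialization: for all $t\in V$: $D[t]=+\infty$, $\mathrm{NH}[t]=\mathrm{PH}[t]=\emptyset$, and for all $u\in N[v]$: $B[u,t]=0$, $S[u,t]=0$; then $S[v,v]=1$, $D[v]=0$. Execution proceeds in synchronous phases; in each phase every node $v$ sends, for every $t\in V$, the message $(t,D[t],S[v,t],B[v,t])$ to every neighbor, receives all messages sent to it by its neighbors in that phase, and processes each of them (in arbitrary order) as follows. On receipt of $(t,d,s,b)$ from $u\in N(v)$: remove $u$ from $\mathrm{NH}[t]$ and from $\mathrm{PH}[t]$; if $d+w(\{u,v\})<D[t]$ set $D[t]\leftarrow d+w(\{u,v\})$; else if $d+w(\{u,v\})=D[t]$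 add $u$ to $\mathrm{NH}[t]$; else if $d-w(\{u,v\})=D[t]$ add $u$ to $\mathrm{PH}[t]$. Then set $S[u,t]\leftarrow s$, $B[u,t]\leftarrow b$; if $t\neq v$ set $S[v,t]\leftarrow\sum_{x\in\mathrm{NH}[t]}S[x,t]$; set $B[v,t]\leftarrow S[v,t]\cdot\sum_{x\in\mathrm{PH}[t]}\frac{B[x,t]+1}{S[x,t]}$ (a term with $S[x,t]=0$ is taken as $0$); finally set $C\leftarrow\sum_{x\neq v}B[v,x]$. *)

theory Defs
  imports Complex_Main "HOL-Library.Extended_Real"
begin

definition nbrs :: "('a \<times> 'a) set \<Rightarrow> 'a \<Rightarrow> 'a set" where
  "nbrs E v = {u. (v, u) \<in> E}"

definition is_walk :: "'a set \<Rightarrow> ('a \<times> 'a) set \<Rightarrow> 'a list \<Rightarrow> bool" where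
  "is_walk V E xs \<longleftrightarrow> xs \<noteq> [] \<and> set xs \<subseteq> V \<and>
     (\<forall>i < length xs - 1. (xs ! i, xs ! Suc i) \<in> E)"

definition walk_len :: "('a \<Rightarrow> 'a \<Rightarrow> real) \<Rightarrow> 'a list \<Rightarrow> real" where
  "walk_len w xs = (\<Sum>i < length xs - 1. w (xs ! i) (xs ! Suc i))"

definition walks_between :: "'a set \<Rightarrow> ('a \<times> 'a) set \<Rightarrow> 'a \<Rightarrow> 'a \<Rightarrow> 'a list set" where
  "walks_between V E s t = {xs. is_walk V E xs \<and> hd xs = s \<and> last xs = t}"

text \<open>Shortest (minimum-length) s-t paths. With positive weights these are simple paths.\<close>
definition shortest_paths ::
  "'a set \<Rightarrow> ('a \<times> 'a) set \<Rightarrow> ('a \<Rightarrow> 'a \<Rightarrow> real) \<Rightarrow> 'a \<Rightarrow> 'a \<Rightarrow> 'a list set" where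
  "shortest_paths V E w s t =
     {xs \<in> walks_between V E s t. \<forall>ys \<in> walks_between V E s t. walk_len w xs \<le> walk_len w ys}"

definition sigma :: "'a set \<Rightarrow> ('a \<times> 'a) set \<Rightarrow> ('a \<Rightarrow> 'a \<Rightarrow> real) \<Rightarrow> 'a \<Rightarrow> 'a \<Rightarrow> nat" where
  "sigma V E w s t = card (shortest_paths V E w s t)"

definition maxhop :: "'a set \<Rightarrow> ('a \<times> 'a) set \<Rightarrow> ('a \<Rightarrow> 'a \<Rightarrow> real) \<Rightarrow> 'a \<Rightarrow> 'a \<Rightarrow> nat" where
  "maxhop V E w s t = (if s = t then 0 else Max ((\<lambda>xs. length xs - 1) ` shortest_paths V E w s t))"

definition hopdiam :: "'a set \<Rightarrow> ('a \<times> 'a) set \<Rightarrow> ('a \<Rightarrow> 'a \<Rightarrow> real) \<Rightarrow> nat" where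
  "hopdiam V E w = Max {maxhop V E w s t | s t. s \<in> V \<and> t \<in> V}"

record 'a nstate =
  Dv :: "'a \<Rightarrow> ereal"
  NH :: "'a \<Rightarrow> 'a set"
  PH :: "'a \<Rightarrow> 'a set"
  Sv :: "'a \<Rightarrow> 'a \<Rightarrow> real"   \<comment> \<open>Sv st u t = S[u,t]\<close>
  Bv :: "'a \<Rightarrow> 'a \<Rightarrow> real"
  Cv :: real

definition init_state :: "'a \<Rightarrow> 'a nstate" where
  "init_state v = \<lparr> Dv = (\<lambda>t. \<infinity>)(v := 0), NH = (\<lambda>t. {}), PH = (\<lambda>t. {}),
      Sv = (\<lambda>u t. if u = v \<and> t = v then 1 else 0), Bv = (\<lambda>u t. 0), Cv = 0 \<rparr>"

text \<open>Processing, at node v, of the message (t,d,s,b) received from neighbour u.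
  Division by zero is 0 in Isabelle, matching the convention for S[x,t] = 0.\<close>
definition process_msg ::
  "'a set \<Rightarrow> ('a \<Rightarrow> 'a \<Rightarrow> real) \<Rightarrow> 'a \<Rightarrow> 'a \<Rightarrow> 'a \<Rightarrow> ereal \<Rightarrow> real \<Rightarrow> real
     \<Rightarrow> 'a nstate \<Rightarrow> 'a nstate" where
  "process_msg V w v u t d s b st =
    (let NH1 = (NH st)(t := NH st t - {u});
         PH1 = (PH st)(t := PH st t - {u});
         dw = d + ereal (w u v);
         st1 = (if dw < Dv st t then st\<lparr>Dv := (Dv st)(t := dw), NH := NH1, PH := PH1\<rparr>
                else if dw = Dv st t then st\<lparr>NH := NH1(t := insert u (NH1 t)), PH := PH1\<rparr>
                else if d - ereal (w u v) = Dv st t then st\<lparr>NH := NH1, PH := PH1(t := insert u (PH1 t))\<rparr>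
                else st\<lparr>NH := NH1, PH := PH1\<rparr>);
         S2 = (Sv st1)(u := (Sv st1 u)(t := s));
         B2 = (Bv st1)(u := (Bv st1 u)(t := b));
         S3 = (if t \<noteq> v then S2(v := (S2 v)(t := (\<Sum>x \<in> NH st1 t. S2 x t))) else S2);
         B3 = B2(v := (B2 v)(t := S3 v t * (\<Sum>x \<in> PH st1 t. (B2 x t + 1) / S3 x t)))
     in st1\<lparr>Sv := S3, Bv := B3, Cv := (\<Sum>x \<in> V - {v}. B3 v x)\<rparr>)"

text \<open>Processing at node v of a list of (sender, target) pairs; the messages carry
  the senders' state g at the beginning of the phase.\<close>
definition process_list ::
  "'a set \<Rightarrow> ('a \<Rightarrow> 'a \<Rightarrow> real) \<Rightarrow> ('a \<Rightarrow> 'a nstate) \<Rightarrow> 'a \<Rightarrow> ('a \<times> 'a) list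
     \<Rightarrow> 'a nstate \<Rightarrow> 'a nstate" where
  "process_list V w g v ms st =
     fold (\<lambda>(u, t) st'. process_msg V w v u t (Dv (g u) t) (Sv (g u) u t) (Bv (g u) u t) st') ms st"

text \<open>ord k v: the (arbitrary) order in which node v processes the messages it
  receives in phase k+1.  run k: global state after k complete phases.\<close>
fun run ::
  "'a set \<Rightarrow> ('a \<Rightarrow> 'a \<Rightarrow> real) \<Rightarrow> (nat \<Rightarrow> 'a \<Rightarrow> ('a \<times> 'a) list) \<Rightarrow> nat \<Rightarrow> 'a \<Rightarrow> 'a nstate" where
  "run V w ord 0 = init_state"
| "run V w ord (Suc k) = (\<lambda>v. process_list V w (run V w ord k) v (ord k v) (run V w ord k v))"

text \<open>State of node v after k complete phases and the first j message processings of phase k+1.\<close>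
definition state_at ::
  "'a set \<Rightarrow> ('a \<Rightarrow> 'a \<Rightarrow> real) \<Rightarrow> (nat \<Rightarrow> 'a \<Rightarrow> ('a \<times> 'a) list) \<Rightarrow> nat \<Rightarrow> nat \<Rightarrow> 'a \<Rightarrow> 'a nstate" where
  "state_at V w ord k j v = process_list V w (run V w ord k) v (take j (ord k v)) (run V w ord k v)"

end

theory Submission
  imports Defs
begin
lemma is_walk_Cons:
  "is_walk V E (x # xs) \<longleftrightarrow> x \<in> V \<and> (xs = [] \<or> ((x, hd xs) \<in> E \<and> is_walk V E xs))"
proof (cases xs)
  case Nil
  then show ?thesis by (simp add: is_walk_def)
next
  case (Cons y ys)
  have "(\<forall>i < Suc (length ys). ((x # y # ys) ! i, (x # y # ys) ! Suc i) \<in> E) \<longleftrightarrow>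
        (x, y) \<in> E \<and> (\<forall>i < length ys. ((y # ys) ! i, (y # ys) ! Suc i) \<in> E)"
    by (auto simp: less_Suc_eq_0_disj)
  then show ?thesis using Cons by (auto simp: is_walk_def)
qed

lemma walk_len_single[simp]: "walk_len w [x] = 0"
  by (simp add: walk_len_def)

lemma walk_len_Cons2[simp]: "walk_len w (x # y # xs) = w x y + walk_len w (y # xs)"
  unfolding walk_len_def by (simp add: sum.lessThan_Suc_shift del: sum.lessThan_Suc)

lemma walk_len_ge:
  assumes "is_walk V E xs" "\<And>a b. (a, b) \<in> E \<Longrightarrow> w a b \<ge> c"
  shows "walk_len w xs \<ge> real (length xs - 1) * c"
  using assms(1)
proof (induction xs)
  case Nil
  then show ?case by (simp add: is_walk_def)
next
  case (Cons x xs)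
  show ?case
  proof (cases xs)
    case Nil
    then show ?thesis by simp
  next
    case (Cons y ys)
    with Cons.prems have e: "(x, y) \<in> E" and wk: "is_walk V E xs"
      by (auto simp: is_walk_Cons)
    have "walk_len w xs \<ge> real (length xs - 1) * c" using Cons.IH wk by simp
    moreover have "w x y \<ge> c" using assms(2) e by simp
    ultimately show ?thesis using Cons by (simp add: algebra_simps)
  qed
qed

locale gr =
  fixes V :: "'a set" and E :: "('a \<times> 'a) set" and w :: "'a \<Rightarrow> 'a \<Rightarrow> real"
  assumes finV: "finite V"
    and EV: "E \<subseteq> V \<times> V"
    and symE: "\<And>u v. (u, v) \<in> E \<Longrightarrow> (v, u) \<in> E"
    and irrE: "\<And>v. (v, v) \<notin> E"
    and conn: "\<And>s t. s \<in> V \<Longrightarrow> t \<in> V \<Longrightarrow> (s, t) \<in> E\<^sup>*"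
    and wpos: "\<And>u v. (u, v) \<in> E \<Longrightarrow> w u v > 0"
    and wsym: "\<And>u v. (u, v) \<in> E \<Longrightarrow> w u v = w v u"
begin

lemma finE: "finite E"
  using finV EV by (meson finite_SigmaI finite_subset)

definition cmin :: real where
  "cmin = (if E = {} then 1 else Min ((\<lambda>(a,b). w a b) ` E))"

lemma cmin_pos: "cmin > 0"
proof (cases "E = {}")
  case False
  have "Min ((\<lambda>(a,b). w a b) ` E) \<in> (\<lambda>(a,b). w a b) ` E"
    using False finE by (intro Min_in) auto
  then obtain a b where "(a,b) \<in> E" "Min ((\<lambda>(a,b). w a b) ` E) = w a b" by auto
  then show ?thesis using False wpos unfolding cmin_def by simp
next
  case True
  then show ?thesis unfolding cmin_def by simp
qed

lemma cmin_le: "(a, b) \<in> E \<Longrightarrow> cmin \<le> w a b"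
  unfolding cmin_def using finE by (auto intro!: Min_le)

lemma walk_len_lb: "is_walk V E xs \<Longrightarrow> walk_len w xs \<ge> real (length xs - 1) * cmin"
  by (rule walk_len_ge) (auto intro: cmin_le)

lemma walk_len_nonneg: "is_walk V E xs \<Longrightarrow> walk_len w xs \<ge> 0"
  using walk_len_lb[of xs] cmin_pos by (meson order_trans mult_nonneg_nonneg of_nat_0_le_iff less_imp_le)

lemma walk_exists:
  assumes "s \<in> V" "t \<in> V" shows "\<exists>xs. xs \<in> walks_between V E s t"
proof -
  have "(s, t) \<in> E\<^sup>*" using conn assms by simp
  then have "\<exists>xs. is_walk V E xs \<and> hd xs = s \<and> last xs = t"
  proof (induction rule: converse_rtrancl_induct)
    case base
    then show ?case using assms by (intro exI[of _ "[t]"]) (simp add: is_walk_def)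
  next
    case (step y z)
    then obtain xs where xs: "is_walk V E xs" "hd xs = z" "last xs = t" by blast
    have "xs \<noteq> []" using xs by (simp add: is_walk_def)
    moreover have "y \<in> V" using step EV by auto
    ultimately show ?case using xs step
      by (intro exI[of _ "y # xs"]) (auto simp: is_walk_Cons)
  qed
  then show ?thesis by (auto simp: walks_between_def)
qed

lemma bounded_finite: "finite {xs \<in> walks_between V E s t. walk_len w xs \<le> L}"
proof -
  have "{xs \<in> walks_between V E s t. walk_len w xs \<le> L} \<subseteq>
        {xs. set xs \<subseteq> V \<and> length xs \<le> nat \<lfloor>L / cmin\<rfloor> + 1}"
  proof safe
    fix xs assume xs: "xs \<in> walks_between V E s t" "walk_len w xs \<le> L"
    then have wk: "is_walk V E xs" by (simp add: walks_between_def)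
    then show "\<And>x. x \<in> set xs \<Longrightarrow> x \<in> V" by (auto simp: is_walk_def)
    have "real (length xs - 1) * cmin \<le> L" using walk_len_lb[OF wk] xs by simp
    then have "real (length xs - 1) \<le> L / cmin" using cmin_pos by (simp add: pos_le_divide_eq)
    then have "int (length xs - 1) \<le> \<lfloor>L / cmin\<rfloor>" by (simp add: le_floor_iff)
    then show "length xs \<le> nat \<lfloor>L / cmin\<rfloor> + 1" by linarith
  qed
  moreover have "finite {xs. set xs \<subseteq> V \<and> length xs \<le> nat \<lfloor>L / cmin\<rfloor> + 1}"
    by (rule finite_lists_length_le[OF finV])
  ultimately show ?thesis by (rule finite_subset)
qed

end

locale grt = gr +
  fixes t :: 'a
  assumes tV: "t \<in> V"
begin

abbreviation "SP x \<equiv> shortest_paths V E w x t"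
abbreviation "WB x \<equiv> walks_between V E x t"

lemma SP_ex: assumes "x \<in> V" shows "\<exists>p. p \<in> SP x"
proof -
  obtain q0 where q0: "q0 \<in> WB x" using walk_exists[OF assms tV] by blast
  let ?F = "{xs \<in> WB x. walk_len w xs \<le> walk_len w q0}"
  have fin: "finite ?F" by (rule bounded_finite)
  have ne: "walk_len w ` ?F \<noteq> {}" using q0 by auto
  have "Min (walk_len w ` ?F) \<in> walk_len w ` ?F" using fin ne by (intro Min_in) auto
  then obtain p where p: "p \<in> ?F" "walk_len w p = Min (walk_len w ` ?F)" by auto
  have "\<forall>ys \<in> WB x. walk_len w p \<le> walk_len w ys"
  proof
    fix ys assume ys: "ys \<in> WB x"
    show "walk_len w p \<le> walk_len w ys"
    proof (cases "walk_len w ys \<le> walk_len w q0")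
      case True
      then have "ys \<in> ?F" using ys by simp
      then show ?thesis using p fin by (simp add: Min_le)
    next
      case False
      then show ?thesis using p by simp
    qed
  qed
  then show ?thesis using p by (auto simp: shortest_paths_def)
qed

lemma SP_WB: "p \<in> SP x \<Longrightarrow> p \<in> WB x"
  by (simp add: shortest_paths_def)

lemma SP_hd: "p \<in> SP u \<Longrightarrow> hd p = u"
  by (simp add: shortest_paths_def walks_between_def)

lemma SP_finite: "finite (SP x)"
proof (cases "SP x = {}")
  case False
  then obtain p where p: "p \<in> SP x" by auto
  have "SP x \<subseteq> {xs \<in> WB x. walk_len w xs \<le> walk_len w p}"
    using p by (auto simp: shortest_paths_def)
  then show ?thesis using bounded_finite finite_subset by blast
qed simp

definition dd :: "'a \<Rightarrow> real" where
  "dd x = walk_len w (SOME p. p \<in> SP x)"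

lemma dd_eq: assumes "p \<in> SP x" shows "walk_len w p = dd x"
proof -
  have s: "(SOME p. p \<in> SP x) \<in> SP x" using assms by (rule someI)
  have "walk_len w (SOME p. p \<in> SP x) \<le> walk_len w p"
    using s assms by (auto simp: shortest_paths_def)
  moreover have "walk_len w p \<le> walk_len w (SOME p. p \<in> SP x)"
    using s assms by (auto simp: shortest_paths_def)
  ultimately show ?thesis unfolding dd_def by linarith
qed

lemma dd_le: assumes "x \<in> V" "q \<in> WB x" shows "dd x \<le> walk_len w q"
proof -
  obtain p where p: "p \<in> SP x" using SP_ex assms by blast
  then have "walk_len w p \<le> walk_len w q" using assms(2) unfolding shortest_paths_def by blast
  then show ?thesis using dd_eq[OF p] by simp
qed

lemma SP_iff: assumes "x \<in> V" shows "xs \<in> SP x \<longleftrightarrow> xs \<in> WB x \<and> walk_len w xs = dd x"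
proof
  assume "xs \<in> SP x" then show "xs \<in> WB x \<and> walk_len w xs = dd x" using dd_eq SP_WB by blast
next
  assume a: "xs \<in> WB x \<and> walk_len w xs = dd x"
  then show "xs \<in> SP x" using dd_le[OF assms] unfolding shortest_paths_def by auto
qed

lemma dd_nonneg: assumes "x \<in> V" shows "dd x \<ge> 0"
proof -
  obtain p where "p \<in> SP x" using SP_ex assms by blast
  then have "is_walk V E p" by (simp add: shortest_paths_def walks_between_def)
  then show ?thesis using dd_eq[OF \<open>p \<in> SP x\<close>] walk_len_nonneg by metis
qed

lemma WB_t: "[t] \<in> WB t"
  using tV by (simp add: walks_between_def is_walk_def)

lemma dd_t: "dd t = 0"
  using dd_le[OF tV WB_t] dd_nonneg[OF tV] by simp

lemma SP_t: "SP t = {[t]}"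
proof
  have "[t] \<in> SP t" using SP_iff[OF tV] WB_t dd_t by simp
  then show "{[t]} \<subseteq> SP t" by blast
  show "SP t \<subseteq> {[t]}"
  proof
    fix xs assume xs: "xs \<in> SP t"
    then have wb: "xs \<in> WB t" using SP_WB by blast
    then have wk: "is_walk V E xs" "hd xs = t" by (auto simp: walks_between_def)
    have l0: "walk_len w xs = 0" using dd_eq[OF xs] dd_t by simp
    have "real (length xs - 1) * cmin \<le> 0" using walk_len_lb[OF wk(1)] l0 by linarith
    then have "real (length xs - 1) \<le> 0" using cmin_pos mult_le_0_iff by (metis not_less)
    then have "length xs - 1 = 0" by linarith
    moreover have "xs \<noteq> []" using wk by (simp add: is_walk_def)
    ultimately have "xs = [hd xs]" by (cases xs) auto
    then show "xs \<in> {[t]}" using wk by simp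
  qed
qed

lemma sigma_t: "sigma V E w t t = 1"
  by (simp add: sigma_def SP_t)

lemma WB_Cons: assumes "(x, u) \<in> E" "p \<in> WB u" shows "x # p \<in> WB x"
proof -
  have "p \<noteq> []" using assms by (simp add: walks_between_def is_walk_def)
  then show ?thesis using assms EV by (auto simp: walks_between_def is_walk_Cons)
qed

lemma walk_len_Cons_hd: "p \<noteq> [] \<Longrightarrow> walk_len w (x # p) = w x (hd p) + walk_len w p"
  by (cases p) auto

lemma dd_tri: assumes "(x, u) \<in> E" shows "dd x \<le> w x u + dd u"
proof -
  have uV: "u \<in> V" "x \<in> V" using assms EV by auto
  obtain p where p: "p \<in> SP u" using SP_ex uV by blast
  have pw: "p \<in> WB u" "p \<noteq> []" "hd p = u" using p
    by (auto simp: shortest_paths_def walks_between_def is_walk_def)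
  have "dd x \<le> walk_len w (x # p)" using dd_le[OF uV(2) WB_Cons[OF assms pw(1)]] .
  also have "\<dots> = w x u + dd u" using walk_len_Cons_hd[OF pw(2)] pw dd_eq[OF p] by simp
  finally show ?thesis .
qed

definition preds :: "'a \<Rightarrow> 'a set" where
  "preds x = {u. (x, u) \<in> E \<and> dd u + w u x = dd x}"

lemma preds_E: "u \<in> preds x \<Longrightarrow> (x, u) \<in> E"
  by (simp add: preds_def)

lemma finite_preds: "finite (preds x)"
proof -
  have "preds x \<subseteq> snd ` E" by (force simp: preds_def)
  then show ?thesis using finE finite_subset by blast
qed

lemma SP_Cons: assumes "u \<in> preds x" "p \<in> SP u" shows "x # p \<in> SP x"
proof -
  have e: "(x, u) \<in> E" using assms preds_E by blast
  have uV: "u \<in> V" "x \<in> V" using e EV by auto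
  have pw: "p \<in> WB u" "p \<noteq> []" "hd p = u" using assms(2)
    by (auto simp: shortest_paths_def walks_between_def is_walk_def)
  have "walk_len w (x # p) = w x u + dd u" using walk_len_Cons_hd[OF pw(2)] pw dd_eq[OF assms(2)] by simp
  also have "\<dots> = dd x" using assms(1) wsym[OF e] by (simp add: preds_def)
  finally show ?thesis using SP_iff[OF uV(2)] WB_Cons[OF e pw(1)] by simp
qed

lemma SP_decomp: assumes "x \<in> V" "x \<noteq> t"
  shows "SP x = (\<Union>u\<in>preds x. (#) x ` SP u)"
proof
  show "(\<Union>u\<in>preds x. (#) x ` SP u) \<subseteq> SP x" using SP_Cons by blast
  show "SP x \<subseteq> (\<Union>u\<in>preds x. (#) x ` SP u)"
  proof
    fix xs assume xs: "xs \<in> SP x"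
    then have wb: "xs \<in> WB x" and len: "walk_len w xs = dd x" using SP_iff assms by auto
    then have "xs \<noteq> []" "hd xs = x" "last xs = t" "is_walk V E xs"
      by (auto simp: walks_between_def is_walk_def)
    then obtain rest where xs_eq: "xs = x # rest" by (cases xs) auto
    have "rest \<noteq> []" using xs_eq \<open>last xs = t\<close> assms(2) by auto
    then obtain u where hdr: "hd rest = u" by blast
    have e: "(x, u) \<in> E" and wr: "is_walk V E rest"
      using \<open>is_walk V E xs\<close> xs_eq \<open>rest \<noteq> []\<close> hdr by (auto simp: is_walk_Cons)
    have uV: "u \<in> V" using e EV by auto
    have rwb: "rest \<in> WB u" using wr hdr \<open>last xs = t\<close> xs_eq \<open>rest \<noteq> []\<close>
      by (auto simp: walks_between_def)
    have l: "walk_len w xs = w x u + walk_len w rest"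
      using walk_len_Cons_hd[OF \<open>rest \<noteq> []\<close>] xs_eq hdr by simp
    have a: "dd x \<le> w x u + dd u" using dd_tri[OF e] .
    have b: "dd u \<le> walk_len w rest" using dd_le[OF uV rwb] .
    have "walk_len w rest = dd u" using a b l len by linarith
    then have "rest \<in> SP u" using SP_iff[OF uV] rwb by simp
    moreover have "u \<in> preds x" using a b l len e wsym[OF e] by (simp add: preds_def)
    ultimately show "xs \<in> (\<Union>u\<in>preds x. (#) x ` SP u)" using xs_eq by blast
  qed
qed

lemma sigma_rec: assumes "x \<in> V" "x \<noteq> t"
  shows "real (sigma V E w x t) = (\<Sum>u\<in>preds x. real (sigma V E w u t))"
proof -
  have "card (SP x) = card (\<Union>u\<in>preds x. (#) x ` SP u)" using SP_decomp[OF assms] by simp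
  also have "\<dots> = (\<Sum>u\<in>preds x. card ((#) x ` SP u))"
  proof (rule card_UN_disjoint)
    show "finite (preds x)" by (rule finite_preds)
    show "\<forall>u\<in>preds x. finite ((#) x ` SP u)" using SP_finite by blast
    show "\<forall>u\<in>preds x. \<forall>j\<in>preds x. u \<noteq> j \<longrightarrow> (#) x ` SP u \<inter> (#) x ` SP j = {}"
      using SP_hd by blast
  qed
  also have "\<dots> = (\<Sum>u\<in>preds x. card (SP u))"
    by (rule sum.cong) (auto intro: card_image inj_onI)
  finally show ?thesis by (simp add: sigma_def)
qed

lemma maxhop_ex: assumes "x \<in> V" shows "\<exists>p\<in>SP x. maxhop V E w x t = length p - 1"
proof (cases "x = t")
  case True
  then show ?thesis by (simp add: maxhop_def SP_t)
next
  case False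
  obtain p0 where "p0 \<in> SP x" using SP_ex assms by blast
  then have "Max ((\<lambda>xs. length xs - 1) ` SP x) \<in> (\<lambda>xs. length xs - 1) ` SP x"
    using SP_finite by (intro Min_in Max_in) auto
  then show ?thesis using False by (auto simp: maxhop_def)
qed

lemma maxhop_ge: assumes "p \<in> SP x" shows "length p - 1 \<le> maxhop V E w x t"
proof (cases "x = t")
  case True
  then show ?thesis using assms by (simp add: SP_t)
next
  case False
  then show ?thesis using assms SP_finite by (auto simp: maxhop_def)
qed

lemma maxhop_pred: assumes "x \<in> V" "x \<noteq> t" "u \<in> preds x"
  shows "maxhop V E w u t + 1 \<le> maxhop V E w x t"
proof -
  have uV: "u \<in> V" using assms preds_E EV by blast
  obtain p where p: "p \<in> SP u" "maxhop V E w u t = length p - 1" using maxhop_ex[OF uV] by blast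
  have "p \<noteq> []" using p by (auto simp: shortest_paths_def walks_between_def is_walk_def)
  have "length (x # p) - 1 \<le> maxhop V E w x t" using maxhop_ge SP_Cons[OF assms(3) p(1)] by blast
  then show ?thesis using p \<open>p \<noteq> []\<close> by simp
qed

end

lemma PM_D: "Dv (process_msg V w v u t' d s b st) t =
  (if t = t' \<and> d + ereal (w u v) < Dv st t then d + ereal (w u v) else Dv st t)"
  unfolding process_msg_def Let_def by auto

lemma PM_NH: "NH (process_msg V w v u t' d s b st) t =
  (if t \<noteq> t' then NH st t else if d + ereal (w u v) = Dv st t then insert u (NH st t - {u})
   else NH st t - {u})"
proof (cases "t = t'")
  case True
  then show ?thesis
    by (cases "d + ereal (w u v) < Dv st t'"; cases "d + ereal (w u v) = Dv st t'";
        cases "d - ereal (w u v) = Dv st t'") (simp_all add: process_msg_def Let_def)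
next
  case False
  then show ?thesis
    by (cases "d + ereal (w u v) < Dv st t'"; cases "d + ereal (w u v) = Dv st t'";
        cases "d - ereal (w u v) = Dv st t'") (simp_all add: process_msg_def Let_def)
qed

lemma ifapp: "(if c then f else g) x = (if c then f x else g x)"
  by simp

lemma PM_S: assumes "u \<noteq> v"
  shows "Sv (process_msg V w v u t' d s b st) x t =
  (if t = t' \<and> x = u then s
   else if t = t' \<and> x = v \<and> t' \<noteq> v
   then (\<Sum>y\<in>NH (process_msg V w v u t' d s b st) t. if y = u then s else Sv st y t)
   else Sv st x t)"
proof (cases "t = t'")
  case True
  show ?thesis using assms unfolding True
  apply (cases "d + ereal (w u v) < Dv st t'"; cases "d + ereal (w u v) = Dv st t'";
        cases "d - ereal (w u v) = Dv st t'"; cases "x = u"; cases "x = v")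
  apply (simp_all add: process_msg_def Let_def ifapp)
  apply (auto intro!: sum.cong)
  done
next
  case False
  show ?thesis using assms False
  by (cases "d + ereal (w u v) < Dv st t'"; cases "d + ereal (w u v) = Dv st t'";
        cases "d - ereal (w u v) = Dv st t'"; cases "x = u"; cases "x = v")
     (auto simp add: process_msg_def Let_def)
qed

lemma process_list_Nil[simp]: "process_list V w g v [] st = st"
  by (simp add: process_list_def)

lemma process_list_Cons[simp]: "process_list V w g v ((u, t') # ms) st =
  process_list V w g v ms (process_msg V w v u t' (Dv (g u) t') (Sv (g u) u t') (Bv (g u) u t') st)"
  by (simp add: process_list_def)

lemma process_list_inv:
  assumes "P st"
    and "\<And>u t' st. (u, t') \<in> set ms \<Longrightarrow> P st \<Longrightarrow>
           P (process_msg V w v u t' (Dv (g u) t') (Sv (g u) u t') (Bv (g u) u t') st)"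
  shows "P (process_list V w g v ms st)"
  using assms
proof (induction ms arbitrary: st)
  case Nil
  then show ?case by simp
next
  case (Cons m ms)
  obtain u t' where m: "m = (u, t')" by (cases m)
  show ?case unfolding m process_list_Cons
    by (rule Cons.IH) (use Cons.prems m in auto)
qed

lemma state_at_0: "state_at V w ord k 0 v = run V w ord k v"
  by (simp add: state_at_def)

lemma PL_mono: "Dv (process_list V w g v ms st) t \<le> Dv st t"
proof (induction ms arbitrary: st)
  case Nil
  then show ?case by simp
next
  case (Cons m ms)
  obtain u t' where m: "m = (u, t')" by (cases m)
  have "Dv (process_msg V w v u t' (Dv (g u) t') (Sv (g u) u t') (Bv (g u) u t') st) t \<le> Dv st t"
    by (auto simp add: PM_D)
  then show ?case unfolding m process_list_Cons
    using Cons.IH order_trans by blast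
qed

lemma PL_le: "(u, t) \<in> set ms \<Longrightarrow> Dv (process_list V w g v ms st) t \<le> Dv (g u) t + ereal (w u v)"
proof (induction ms arbitrary: st)
  case Nil
  then show ?case by simp
next
  case (Cons m ms)
  obtain u' t' where m: "m = (u', t')" by (cases m)
  show ?case
  proof (cases "(u, t) \<in> set ms")
    case True
    then show ?thesis unfolding m process_list_Cons using Cons.IH by blast
  next
    case False
    then have "m = (u, t)" using Cons.prems by auto
    have e: "Dv (process_msg V w v u t (Dv (g u) t) (Sv (g u) u t) (Bv (g u) u t) st) t
      = (if Dv (g u) t + ereal (w u v) < Dv st t then Dv (g u) t + ereal (w u v) else Dv st t)"
      by (simp only: PM_D simp_thms)
    have "Dv (process_msg V w v u t (Dv (g u) t) (Sv (g u) u t) (Bv (g u) u t) st) t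
               \<le> Dv (g u) t + ereal (w u v)"
      unfolding e by (metis not_less order_refl)
    then show ?thesis unfolding \<open>m = (u, t)\<close> process_list_Cons
      by (rule order_trans[OF PL_mono])
  qed
qed

lemma PM_Svv: "u \<noteq> v \<Longrightarrow> Sv (process_msg V w v u t' d s b st) v v = Sv st v v"
  using PM_S[where u = u and v = v and x = v and t = v] by auto

locale alg = grt +
  fixes ord :: "nat \<Rightarrow> 'a \<Rightarrow> ('a \<times> 'a) list"
  assumes ord_ok: "\<And>k v. v \<in> V \<Longrightarrow> distinct (ord k v) \<and> set (ord k v) = nbrs E v \<times> V"
begin

lemma ord_set: "v \<in> V \<Longrightarrow> (u, t') \<in> set (ord k v) \<longleftrightarrow> (v, u) \<in> E \<and> t' \<in> V"
  using ord_ok[of v k] by (auto simp: nbrs_def)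

lemma run_inv:
  assumes init: "\<And>v. v \<in> V \<Longrightarrow> P v (init_state v)"
    and step: "\<And>g v u t' st. v \<in> V \<Longrightarrow> (v, u) \<in> E \<Longrightarrow> t' \<in> V \<Longrightarrow> (\<forall>x\<in>V. P x (g x)) \<Longrightarrow>
       P v st \<Longrightarrow> P v (process_msg V w v u t' (Dv (g u) t') (Sv (g u) u t') (Bv (g u) u t') st)"
  shows run_inv_run: "\<And>v. v \<in> V \<Longrightarrow> P v (run V w ord k v)"
    and run_inv_state: "\<And>v. v \<in> V \<Longrightarrow> P v (state_at V w ord k j v)"
proof -
  have A: "\<forall>v\<in>V. P v (run V w ord k v)" for k
  proof (induction k)
    case 0
    then show ?case using init by simp
  next
    case (Suc k)
    show ?case
    proof
      fix v assume v: "v \<in> V"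
      show "P v (run V w ord (Suc k) v)"
        unfolding run.simps
        by (rule process_list_inv[where P = "P v"]) (use Suc v step ord_set in auto)
    qed
  qed
  show "\<And>v. v \<in> V \<Longrightarrow> P v (run V w ord k v)" using A by blast
  show "\<And>v. v \<in> V \<Longrightarrow> P v (state_at V w ord k j v)"
  proof -
    fix v assume v: "v \<in> V"
    show "P v (state_at V w ord k j v)"
      unfolding state_at_def
      by (rule process_list_inv[where P = "P v"])
         (use A v step ord_set in \<open>auto dest: in_set_takeD\<close>)
  qed
qed

lemma LB: assumes "v \<in> V"
  shows LB_run: "ereal (dd v) \<le> Dv (run V w ord k v) t"
    and LB_state: "ereal (dd v) \<le> Dv (state_at V w ord k j v) t"
proof -
  have step: "ereal (dd v) \<le> Dv (process_msg V w v u t' (Dv (g u) t') (Sv (g u) u t') (Bv (g u) u t') st) t"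
    if "v \<in> V" "(v, u) \<in> E" "\<forall>x\<in>V. ereal (dd x) \<le> Dv (g x) t" "ereal (dd v) \<le> Dv st t"
    for g v u t' st
  proof -
    have uV: "u \<in> V" using that EV by auto
    have "dd v \<le> w v u + dd u" using dd_tri that by blast
    then have "ereal (dd v) \<le> ereal (dd u) + ereal (w u v)" using wsym[OF that(2)] by simp
    also have "\<dots> \<le> Dv (g u) t + ereal (w u v)" using that(3) uV by (intro add_right_mono) auto
    finally have a: "ereal (dd v) \<le> Dv (g u) t + ereal (w u v)" .
    show ?thesis
    proof (cases "t' = t \<and> Dv (g u) t + ereal (w u v) < Dv st t")
      case True
      then show ?thesis using a by (simp add: PM_D)
    next
      case False
      then have "Dv (process_msg V w v u t' (Dv (g u) t') (Sv (g u) u t') (Bv (g u) u t') st) t = Dv st t"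
        by (auto simp add: PM_D)
      then show ?thesis using that(4) by simp
    qed
  qed
  have init: "ereal (dd v) \<le> Dv (init_state v) t" if "v \<in> V" for v
    using dd_t by (auto simp: init_state_def)
  show "ereal (dd v) \<le> Dv (run V w ord k v) t"
    by (rule run_inv_run[where P = "\<lambda>v st. ereal (dd v) \<le> Dv st t"]) (use init step assms in auto)
  show "ereal (dd v) \<le> Dv (state_at V w ord k j v) t"
    by (rule run_inv_state[where P = "\<lambda>v st. ereal (dd v) \<le> Dv st t"]) (use init step assms in auto)
qed


lemma WB_V: "xs \<in> WB v \<Longrightarrow> v \<in> V"
  by (auto simp: walks_between_def is_walk_def)

lemma UB: "\<forall>v xs. xs \<in> WB v \<and> length xs \<le> k + 1 \<longrightarrow> Dv (run V w ord k v) t \<le> ereal (walk_len w xs)"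
proof (induction k)
  case 0
  show ?case
  proof (intro allI impI)
    fix v xs assume a: "xs \<in> WB v \<and> length xs \<le> 0 + 1"
    then have "xs \<noteq> []" by (auto simp: walks_between_def is_walk_def)
    then obtain x where "xs = [x]" using a by (cases xs) auto
    then have "xs = [t]" "v = t" using a by (auto simp: walks_between_def)
    then show "Dv (run V w ord 0 v) t \<le> ereal (walk_len w xs)" by (simp add: init_state_def)
  qed
next
  case (Suc k)
  show ?case
  proof (intro allI impI)
    fix v xs assume a: "xs \<in> WB v \<and> length xs \<le> Suc k + 1"
    have vV: "v \<in> V" using a WB_V by blast
    have wk: "is_walk V E xs" "hd xs = v" "last xs = t" using a by (auto simp: walks_between_def)
    then have "xs \<noteq> []" by (auto simp: is_walk_def)
    then obtain rest where xs: "xs = v # rest" using wk by (cases xs) auto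
    show "Dv (run V w ord (Suc k) v) t \<le> ereal (walk_len w xs)"
    proof (cases rest)
      case Nil
      then have vt: "v = t" "xs = [t]" using xs wk by auto
      have "Dv (run V w ord (Suc k) v) t \<le> Dv (run V w ord k v) t"
        unfolding run.simps by (rule PL_mono)
      also have "\<dots> \<le> ereal (walk_len w xs)" using Suc.IH[rule_format, of "[t]" t] WB_t vt by simp
      finally show ?thesis .
    next
      case (Cons u rest')
      have e: "(v, u) \<in> E" and wr: "is_walk V E rest" using wk xs Cons by (auto simp: is_walk_Cons)
      have rwb: "rest \<in> WB u" using wr wk xs Cons by (auto simp: walks_between_def)
      have inord: "(u, t) \<in> set (ord k v)" using ord_set[OF vV] e tV by simp
      have "Dv (run V w ord (Suc k) v) t \<le> Dv (run V w ord k u) t + ereal (w u v)"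
        unfolding run.simps by (rule PL_le[OF inord])
      also have "\<dots> \<le> ereal (walk_len w rest) + ereal (w u v)"
        using Suc.IH rwb a xs by (intro add_right_mono) auto
      also have "\<dots> = ereal (walk_len w xs)" using xs Cons wsym[OF e] by simp
      finally show ?thesis .
    qed
  qed
qed

lemma D_exact: assumes "v \<in> V" "maxhop V E w v t \<le> k"
  shows D_exact_run: "Dv (run V w ord k v) t = ereal (dd v)"
    and D_exact_state: "Dv (state_at V w ord k j v) t = ereal (dd v)"
proof -
  obtain p where p: "p \<in> SP v" using SP_ex assms by blast
  have "p \<noteq> []" using p by (auto simp: shortest_paths_def walks_between_def is_walk_def)
  have "length p - 1 \<le> k" using maxhop_ge[OF p] assms by simp
  then have "length p \<le> k + 1" by simp
  then have "Dv (run V w ord k v) t \<le> ereal (walk_len w p)" using UB SP_WB[OF p] by blast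
  then have r: "Dv (run V w ord k v) t \<le> ereal (dd v)" using dd_eq[OF p] by simp
  then show "Dv (run V w ord k v) t = ereal (dd v)" using LB_run[OF assms(1)] by (rule order_antisym)
  have "Dv (state_at V w ord k j v) t \<le> Dv (run V w ord k v) t"
    unfolding state_at_def by (rule PL_mono)
  then have "Dv (state_at V w ord k j v) t \<le> ereal (dd v)" using r by (rule order_trans)
  then show "Dv (state_at V w ord k j v) t = ereal (dd v)" using LB_state[OF assms(1)] by (rule order_antisym)
qed

definition INVp :: "'a \<Rightarrow> 'a nstate \<Rightarrow> bool" where
  "INVp v st \<longleftrightarrow> (v \<noteq> t \<longrightarrow> NH st t \<subseteq> nbrs E v \<and> Sv st v t = (\<Sum>x\<in>NH st t. Sv st x t))"

lemma INV_step:
  assumes "v \<in> V" "(v, u) \<in> E" "INVp v st"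
  shows "INVp v (process_msg V w v u t' d s b st)"
proof -
  have uv: "u \<noteq> v" using assms irrE by blast
  have un: "u \<in> nbrs E v" using assms by (simp add: nbrs_def)
  let ?r = "process_msg V w v u t' d s b st"
  show ?thesis unfolding INVp_def
  proof
    assume vt: "v \<noteq> t"
    have I: "NH st t \<subseteq> nbrs E v" "Sv st v t = (\<Sum>x\<in>NH st t. Sv st x t)"
      using assms(3) vt by (auto simp: INVp_def)
    have N: "NH ?r t \<subseteq> nbrs E v" using I(1) un by (auto simp: PM_NH)
    have nv: "v \<notin> nbrs E v" using irrE by (simp add: nbrs_def)
    show "NH ?r t \<subseteq> nbrs E v \<and> Sv ?r v t = (\<Sum>x\<in>NH ?r t. Sv ?r x t)"
    proof (cases "t' = t")
      case True
      have "Sv ?r v t = (\<Sum>y\<in>NH ?r t. if y = u then s else Sv st y t)"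
        using PM_S[OF uv, where x = v and t = t and t' = t' and st = st] True vt uv by auto
      also have "\<dots> = (\<Sum>x\<in>NH ?r t. Sv ?r x t)"
      proof (rule sum.cong)
        fix y assume "y \<in> NH ?r t"
        then have "y \<noteq> v" using N nv by blast
        then show "(if y = u then s else Sv st y t) = Sv ?r y t"
          using PM_S[OF uv, where x = y and t = t and t' = t' and st = st] True by auto
      qed simp
      finally show ?thesis using N by simp
    next
      case False
      have NH: "NH ?r t = NH st t" using False by (simp add: PM_NH)
      have S: "Sv ?r x t = Sv st x t" for x
        using PM_S[OF uv, where x = x and t = t and t' = t' and st = st] False by auto
      show ?thesis using N I NH S by simp
    qed
  qed
qed

lemma INV: assumes "v \<in> V"
  shows INV_run: "INVp v (run V w ord k v)" and INV_state: "INVp v (state_at V w ord k j v)"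
proof -
  have init: "INVp v (init_state v)" for v
    by (auto simp: INVp_def init_state_def)
  show "INVp v (run V w ord k v)"
    by (rule run_inv_run[where P = INVp]) (use init INV_step assms in auto)
  show "INVp v (state_at V w ord k j v)"
    by (rule run_inv_state[where P = INVp]) (use init INV_step assms in auto)
qed

lemma Stt: "Sv (state_at V w ord k j t) t t = 1"
proof -
  have step: "(v = t \<longrightarrow> Sv (process_msg V w v u t' d s b st) t t = 1)"
    if "(v, u) \<in> E" "v = t \<longrightarrow> Sv st t t = 1" for v u t' d s b st
  proof
    assume vt: "v = t"
    have uv: "u \<noteq> v" using that irrE by blast
    have "Sv (process_msg V w v u t' d s b st) v v = Sv st v v" by (rule PM_Svv[OF uv])
    then show "Sv (process_msg V w v u t' d s b st) t t = 1" using vt that(2) by simp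
  qed
  have init: "v = t \<longrightarrow> Sv (init_state v) t t = 1" for v
    by (simp add: init_state_def)
  have "t = t \<longrightarrow> Sv (state_at V w ord k j t) t t = 1"
  proof (rule run_inv_state[where P = "\<lambda>v st. v = t \<longrightarrow> Sv st t t = 1"])
    fix v show "v = t \<longrightarrow> Sv (init_state v) t t = 1" by (rule init)
  next
    fix g :: "'a \<Rightarrow> 'a nstate" and v u t' and st :: "'a nstate"
    assume "(v, u) \<in> E" "v = t \<longrightarrow> Sv st t t = 1"
    then show "v = t \<longrightarrow> Sv (process_msg V w v u t' (Dv (g u) t') (Sv (g u) u t') (Bv (g u) u t') st) t t = 1"
      by (rule step)
  qed (rule tV)
  then show ?thesis by simp
qed

end

context alg begin

lemma phase:
  fixes g :: "'a \<Rightarrow> 'a nstate" and st0 :: "'a nstate"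
  assumes vV: "v \<in> V" and vt: "v \<noteq> t"
    and glb: "\<And>u. (v, u) \<in> E \<Longrightarrow> ereal (dd u) \<le> Dv (g u) t"
    and gp: "\<And>u. u \<in> preds v \<Longrightarrow> Dv (g u) t = ereal (dd u)"
    and ms: "set ms \<subseteq> nbrs E v \<times> V"
    and D0: "Dv st0 t = ereal (dd v)"
  shows "Dv (process_list V w g v ms st0) t = ereal (dd v) \<and>
    (\<forall>u. u \<in> NH (process_list V w g v ms st0) t \<longleftrightarrow>
          (if (u, t) \<in> set ms then u \<in> preds v else u \<in> NH st0 t)) \<and>
    (\<forall>x. x \<noteq> v \<longrightarrow> Sv (process_list V w g v ms st0) x t =
          (if (x, t) \<in> set ms then Sv (g x) x t else Sv st0 x t))"
  using ms D0
proof (induction ms arbitrary: st0)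
  case Nil
  then show ?case by simp
next
  case (Cons m ms)
  obtain u t' where m: "m = (u, t')" by (cases m)
  have e: "(v, u) \<in> E" using Cons.prems m by (auto simp: nbrs_def)
  have uv: "u \<noteq> v" using e irrE by blast
  define st1 where "st1 = process_msg V w v u t' (Dv (g u) t') (Sv (g u) u t') (Bv (g u) u t') st0"
  have PL: "process_list V w g v (m # ms) st0 = process_list V w g v ms st1"
    unfolding m st1_def by simp
  have msub: "set ms \<subseteq> nbrs E v \<times> V" using Cons.prems by auto
  show ?case
  proof (cases "t' = t")
    case False
    have D1: "Dv st1 t = ereal (dd v)" using False Cons.prems by (simp add: st1_def PM_D)
    have N1: "NH st1 t = NH st0 t" using False by (simp add: st1_def PM_NH)
    have S1: "Sv st1 x t = Sv st0 x t" for x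
      using PM_S[OF uv, where x = x and t = t and t' = t' and st = st0] False by (auto simp: st1_def)
    have IH: "Dv (process_list V w g v ms st1) t = ereal (dd v) \<and>
      (\<forall>u. u \<in> NH (process_list V w g v ms st1) t \<longleftrightarrow>
          (if (u, t) \<in> set ms then u \<in> preds v else u \<in> NH st1 t)) \<and>
      (\<forall>x. x \<noteq> v \<longrightarrow> Sv (process_list V w g v ms st1) x t =
          (if (x, t) \<in> set ms then Sv (g x) x t else Sv st1 x t))"
      using Cons.IH[OF msub D1] .
    have setm: "(y, t) \<in> set (m # ms) \<longleftrightarrow> (y, t) \<in> set ms" for y using m False by auto
    show ?thesis unfolding PL setm using IH N1 S1 by simp
  next
    case True
    have uV: "u \<in> V" using e EV by auto
    have tri: "dd v \<le> dd u + w u v" using dd_tri[OF e] wsym[OF e] by simp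
    have "ereal (dd u) + ereal (w u v) \<le> Dv (g u) t + ereal (w u v)"
      using glb[OF e] by (rule add_right_mono)
    then have lb: "ereal (dd u + w u v) \<le> Dv (g u) t + ereal (w u v)" by simp
    have notlt: "\<not> Dv (g u) t + ereal (w u v) < Dv st0 t"
    proof
      assume "Dv (g u) t + ereal (w u v) < Dv st0 t"
      then have "ereal (dd u + w u v) < ereal (dd v)" using lb Cons.prems(2) by (metis order_le_less_trans)
      then show False using tri by simp
    qed
    have iff: "Dv (g u) t + ereal (w u v) = Dv st0 t \<longleftrightarrow> u \<in> preds v"
    proof
      assume a: "u \<in> preds v"
      then have "dd u + w u v = dd v" by (simp add: preds_def)
      then show "Dv (g u) t + ereal (w u v) = Dv st0 t" using gp[OF a] Cons.prems(2) by simp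
    next
      assume a: "Dv (g u) t + ereal (w u v) = Dv st0 t"
      show "u \<in> preds v"
      proof (rule ccontr)
        assume "u \<notin> preds v"
        then have "dd u + w u v \<noteq> dd v" using e by (simp add: preds_def)
        then have "ereal (dd v) < ereal (dd u + w u v)" using tri by simp
        also have "\<dots> \<le> Dv st0 t" using lb a by simp
        finally show False using Cons.prems(2) by simp
      qed
    qed
    have D1: "Dv st1 t = ereal (dd v)" using True Cons.prems notlt by (simp add: st1_def PM_D)
    have N1: "NH st1 t = (if u \<in> preds v then insert u (NH st0 t - {u}) else NH st0 t - {u})"
      using True iff by (simp add: st1_def PM_NH)
    have S1: "x \<noteq> v \<Longrightarrow> Sv st1 x t = (if x = u then Sv (g u) u t else Sv st0 x t)" for x
      using PM_S[OF uv, where x = x and t = t and t' = t' and st = st0] True by (auto simp: st1_def)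
    have IH: "Dv (process_list V w g v ms st1) t = ereal (dd v) \<and>
      (\<forall>u. u \<in> NH (process_list V w g v ms st1) t \<longleftrightarrow>
          (if (u, t) \<in> set ms then u \<in> preds v else u \<in> NH st1 t)) \<and>
      (\<forall>x. x \<noteq> v \<longrightarrow> Sv (process_list V w g v ms st1) x t =
          (if (x, t) \<in> set ms then Sv (g x) x t else Sv st1 x t))"
      using Cons.IH[OF msub D1] .
    have setm: "(y, t) \<in> set (m # ms) \<longleftrightarrow> y = u \<or> (y, t) \<in> set ms" for y using m True by auto
    show ?thesis unfolding PL setm using IH N1 S1 by auto
  qed
qed

end

context alg begin

lemma main:
  "v \<in> V \<Longrightarrow> maxhop V E w v t + 1 \<le> k \<Longrightarrow> Sv (state_at V w ord k j v) v t = real (sigma V E w v t)"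
proof (induction "maxhop V E w v t" arbitrary: v k j rule: less_induct)
  case less
  show ?case
  proof (cases "v = t")
    case True
    then show ?thesis using Stt sigma_t by simp
  next
    case vt: False
    have vV: "v \<in> V" using less.prems by simp
    obtain p where k: "k = Suc p" using less.prems by (cases k) auto
    have mp: "maxhop V E w v t \<le> p" using less.prems k by simp
    have predI: "u \<in> V \<and> (v, u) \<in> E \<and> maxhop V E w u t + 1 \<le> maxhop V E w v t" if "u \<in> preds v" for u
      using that preds_E EV maxhop_pred[OF vV vt] by blast
    have runS: "Sv (run V w ord k' u) u t = real (sigma V E w u t)"
      if "u \<in> preds v" "maxhop V E w u t + 1 \<le> k'" for u k'
    proof -
      have "maxhop V E w u t < maxhop V E w v t" using predI[OF that(1)] by simp
      then have "Sv (state_at V w ord k' 0 u) u t = real (sigma V E w u t)"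
        using less.hyps predI[OF that(1)] that(2) by blast
      then show ?thesis by (simp add: state_at_0)
    qed
    have glb: "\<And>u. (v, u) \<in> E \<Longrightarrow> ereal (dd u) \<le> Dv (run V w ord q u) t" for q
      using LB_run EV by blast
    have gp: "\<And>u. u \<in> preds v \<Longrightarrow> Dv (run V w ord q u) t = ereal (dd u)" if "maxhop V E w v t \<le> q" for q
      using D_exact_run predI that by fastforce
    have msp: "set (take j' (ord q v)) \<subseteq> nbrs E v \<times> V" for q j'
      using ord_ok[OF vV, of q] set_take_subset[of j' "ord q v"] by simp
    have msf: "set (ord q v) \<subseteq> nbrs E v \<times> V" for q
      using ord_ok[OF vV] by blast
    note P1 = phase[OF vV vt glb gp[OF mp] msf D_exact_run[OF vV mp]]
    have runk: "run V w ord k v = process_list V w (run V w ord p) v (ord p v) (run V w ord p v)"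
      by (simp add: k)
    have inv_p: "NH (run V w ord p v) t \<subseteq> nbrs E v" using INV_run[OF vV] vt by (simp add: INVp_def)
    have NHk: "NH (run V w ord k v) t = preds v"
    proof (intro set_eqI)
      fix u
      show "u \<in> NH (run V w ord k v) t \<longleftrightarrow> u \<in> preds v"
      proof (cases "(u, t) \<in> set (ord p v)")
        case True
        then show ?thesis using P1 runk by simp
      next
        case False
        then have "(v, u) \<notin> E" using ord_set[OF vV] tV by simp
        then have "u \<notin> preds v" "u \<notin> NH (run V w ord p v) t"
          using preds_E inv_p by (auto simp: nbrs_def)
        then show ?thesis using P1 runk False by simp
      qed
    qed
    have Sk: "Sv (run V w ord k v) x t = real (sigma V E w x t)" if "x \<in> preds v" for x
    proof -
      have "x \<noteq> v" "(x, t) \<in> set (ord p v)" using predI[OF that] irrE ord_set[OF vV] tV by auto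
      then have "Sv (run V w ord k v) x t = Sv (run V w ord p x) x t" using P1 runk by simp
      also have "\<dots> = real (sigma V E w x t)" using runS[OF that] predI[OF that] mp by simp
      finally show ?thesis .
    qed
    have mk: "maxhop V E w v t \<le> k" using mp k by simp
    note P2 = phase[OF vV vt glb gp[OF mk] msp[of j k] D_exact_run[OF vV mk]]
    have stj: "state_at V w ord k j v = process_list V w (run V w ord k) v (take j (ord k v)) (run V w ord k v)"
      by (simp add: state_at_def)
    have NHj: "NH (state_at V w ord k j v) t = preds v"
    proof (intro set_eqI)
      fix u
      show "u \<in> NH (state_at V w ord k j v) t \<longleftrightarrow> u \<in> preds v"
        using P2 NHk unfolding stj by auto
    qed
    have Sj: "Sv (state_at V w ord k j v) x t = real (sigma V E w x t)" if "x \<in> preds v" for x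
    proof -
      have xv: "x \<noteq> v" using predI[OF that] irrE by auto
      show ?thesis
      proof (cases "(x, t) \<in> set (take j (ord k v))")
        case True
        then have "Sv (state_at V w ord k j v) x t = Sv (run V w ord k x) x t" using P2 xv unfolding stj by simp
        also have "\<dots> = real (sigma V E w x t)" using runS[OF that] predI[OF that] mk by simp
        finally show ?thesis .
      next
        case False
        then have "Sv (state_at V w ord k j v) x t = Sv (run V w ord k v) x t" using P2 xv unfolding stj by simp
        then show ?thesis using Sk[OF that] by simp
      qed
    qed
    have "Sv (state_at V w ord k j v) v t = (\<Sum>x\<in>NH (state_at V w ord k j v) t. Sv (state_at V w ord k j v) x t)"
      using INV_state[OF vV] vt by (simp add: INVp_def)
    also have "\<dots> = (\<Sum>x\<in>preds v. real (sigma V E w x t))" using NHj Sj by simp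
    also have "\<dots> = real (sigma V E w v t)" using sigma_rec[OF vV vt] by simp
    finally show ?thesis .
  qed
qed

end

theorem lemma3:
  fixes V :: "'a set" and E :: "('a \<times> 'a) set" and w :: "'a \<Rightarrow> 'a \<Rightarrow> real"
    and ord :: "nat \<Rightarrow> 'a \<Rightarrow> ('a \<times> 'a) list"
  assumes finV: "finite V"
    and EV: "E \<subseteq> V \<times> V"
    and symE: "\<And>u v. (u, v) \<in> E \<Longrightarrow> (v, u) \<in> E"
    and irrE: "\<And>v. (v, v) \<notin> E"
    and conn: "\<And>s t. s \<in> V \<Longrightarrow> t \<in> V \<Longrightarrow> (s, t) \<in> E\<^sup>*"
    and wpos: "\<And>u v. (u, v) \<in> E \<Longrightarrow> w u v > 0"
    and wsym: "\<And>u v. (u, v) \<in> E \<Longrightarrow> w u v = w v u"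
    and ord_ok: "\<And>k v. v \<in> V \<Longrightarrow> distinct (ord k v) \<and> set (ord k v) = nbrs E v \<times> V"
  shows "\<forall>k \<ge> hopdiam V E w + 1. \<forall>j. \<forall>v \<in> V. \<forall>t \<in> V.
           Sv (state_at V w ord k j v) v t = real (sigma V E w v t)"
proof (intro allI impI ballI)
  fix k j v t
  assume k: "hopdiam V E w + 1 \<le> k" and vV: "v \<in> V" and tV: "t \<in> V"
  interpret alg V E w t ord
  proof (unfold_locales)
    show "finite V" by (rule finV)
    show "E \<subseteq> V \<times> V" by (rule EV)
    show "\<And>u v. (u, v) \<in> E \<Longrightarrow> (v, u) \<in> E" by (rule symE)
    show "\<And>v. (v, v) \<notin> E" by (rule irrE)
    show "\<And>s t. s \<in> V \<Longrightarrow> t \<in> V \<Longrightarrow> (s, t) \<in> E\<^sup>*" by (rule conn)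
    show "\<And>u v. (u, v) \<in> E \<Longrightarrow> w u v > 0" by (rule wpos)
    show "\<And>u v. (u, v) \<in> E \<Longrightarrow> w u v = w v u" by (rule wsym)
    show "t \<in> V" by (rule tV)
    show "\<And>k v. v \<in> V \<Longrightarrow> distinct (ord k v) \<and> set (ord k v) = nbrs E v \<times> V" by (rule ord_ok)
  qed
  have fin: "finite {maxhop V E w s t' |s t'. s \<in> V \<and> t' \<in> V}"
  proof -
    have "{maxhop V E w s t' |s t'. s \<in> V \<and> t' \<in> V} = (\<lambda>(s, t'). maxhop V E w s t') ` (V \<times> V)"
      by auto
    then show ?thesis using finV by simp
  qed
  have "maxhop V E w v t \<le> hopdiam V E w"
    unfolding hopdiam_def using vV tV by (intro Max_ge[OF fin]) blast
  then show "Sv (state_at V w ord k j v) v t = real (sigma V E w v t)"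
    using main[OF vV] k by simp
qed

end
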